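(* Let $\varphi$ be an arithmetic formula (set parameters allowed). Then \[ \mathrm{ACA}_0\vdash{\tt wo}(\Lambda)\to\forall\lambda\in|\Lambda|\,\big(\widehat{\tt TR}^\Lambda_\lambda(\varphi,X)\leftrightarrow{\tt TR}^\Lambda_\lambda(\varphi,X)\big). \]
   Context: Second-order arithmetic with $0,1,+,\times$, exponentiation, $<,=,\in$; $\mathrm{ACA}_0=\mathrm Q+{\tt Ind}+$arithmetic comprehension. A set $\Lambda$ codes $(|\Lambda|,<_\Lambda)$; ${\tt wo}(\Lambda)$ states it is a linear order on $|\Lambda|$ with every nonempty subset having a least element. $\langle\cdot,\cdot\rangle$ is pairing with projections $(x)_0,(x)_1$; $Y_\xi=\{x:\langle\xi,x\rangle\in Y\}$. For a formula $\varphi(x,Y)$ with recursion variable $Y$, $\varphi(x,Y_{<\lambda})$ replaces each atom $t\in Y$ by $(t)_0<_\Lambda\lambda\wedge t\in Y$. ${\tt TR}^\Lambda_\lambda(\varphi,Y)$ is $\forall\xi\le_\Lambda\lambda\,\forall x(x\in Y_\xi\leftrightarrow\varphi(x,Y_{<\xi}))$. $\widehat{\tt TR}^\Lambda_\lambda(\varphi,X)$ is $\forall x\big((x)_0\le_\Lambda\lambda\to[x\in X\leftrightarrow\forall Y({\tt TR}^\Lambda_{(x)_0}(\varphi,Y)\to\varphi((x)_1,Y_{<(x)_0}))]\big)$. *)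

theory Defs
  imports Main
begin

(* Two-sorted language of second-order arithmetic: 0,1,+,*,exp,<,=,\<in>.
   Number variables and set variables are both indexed by nat (separate namespaces). *)
datatype tm = Var nat | Zero | One | Add tm tm | Mul tm tm | Pow tm tm

datatype fm = Eq tm tm | Lt tm tm | Mem tm nat
  | Neg fm | Conj fm fm | Disj fm fm | Imp fm fm
  | All nat fm | Ex nat fm
  | SAll nat fm | SEx nat fm

fun arith :: "fm \<Rightarrow> bool" where
  "arith (Eq t u) = True"
| "arith (Lt t u) = True"
| "arith (Mem t X) = True"
| "arith (Neg p) = arith p"
| "arith (Conj p q) = (arith p \<and> arith q)"
| "arith (Disj p q) = (arith p \<and> arith q)"
| "arith (Imp p q) = (arith p \<and> arith q)"
| "arith (All n p) = arith p"
| "arith (Ex n p) = arith p"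
| "arith (SAll X p) = False"
| "arith (SEx X p) = False"

(* Henkin (general) structures: number domain = the type 'a, set sort = sets *)
record 'a s2 =
  zer :: 'a
  one :: 'a
  add :: "'a \<Rightarrow> 'a \<Rightarrow> 'a"
  mul :: "'a \<Rightarrow> 'a \<Rightarrow> 'a"
  pw  :: "'a \<Rightarrow> 'a \<Rightarrow> 'a"
  ls  :: "'a \<Rightarrow> 'a \<Rightarrow> bool"
  sets :: "'a set set"

fun ev :: "'a s2 \<Rightarrow> (nat \<Rightarrow> 'a) \<Rightarrow> tm \<Rightarrow> 'a" where
  "ev M e (Var n) = e n"
| "ev M e Zero = zer M"
| "ev M e One = one M"
| "ev M e (Add t u) = add M (ev M e t) (ev M e u)"
| "ev M e (Mul t u) = mul M (ev M e t) (ev M e u)"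
| "ev M e (Pow t u) = pw M (ev M e t) (ev M e u)"

fun sat :: "'a s2 \<Rightarrow> (nat \<Rightarrow> 'a) \<Rightarrow> (nat \<Rightarrow> 'a set) \<Rightarrow> fm \<Rightarrow> bool" where
  "sat M e E (Eq t u) = (ev M e t = ev M e u)"
| "sat M e E (Lt t u) = ls M (ev M e t) (ev M e u)"
| "sat M e E (Mem t X) = (ev M e t \<in> E X)"
| "sat M e E (Neg p) = (\<not> sat M e E p)"
| "sat M e E (Conj p q) = (sat M e E p \<and> sat M e E q)"
| "sat M e E (Disj p q) = (sat M e E p \<or> sat M e E q)"
| "sat M e E (Imp p q) = (sat M e E p \<longrightarrow> sat M e E q)"
| "sat M e E (All n p) = (\<forall>a. sat M (e(n := a)) E p)"
| "sat M e E (Ex n p) = (\<exists>a. sat M (e(n := a)) E p)"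
| "sat M e E (SAll X p) = (\<forall>A\<in>sets M. sat M e (E(X := A)) p)"
| "sat M e E (SEx X p) = (\<exists>A\<in>sets M. sat M e (E(X := A)) p)"

definition ACA0_model :: "'a s2 \<Rightarrow> bool" where
  "ACA0_model M \<longleftrightarrow>
     \<comment> \<open>Q (with exponentiation and <)\<close>
     (\<forall>m. add M m (one M) \<noteq> zer M) \<and>
     (\<forall>m n. add M m (one M) = add M n (one M) \<longrightarrow> m = n) \<and>
     (\<forall>m. m \<noteq> zer M \<longrightarrow> (\<exists>n. m = add M n (one M))) \<and>
     (\<forall>m. add M m (zer M) = m) \<and>
     (\<forall>m n. add M m (add M n (one M)) = add M (add M m n) (one M)) \<and>
     (\<forall>m. mul M m (zer M) = zer M) \<and>
     (\<forall>m n. mul M m (add M n (one M)) = add M (mul M m n) m) \<and>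
     (\<forall>m. pw M m (zer M) = one M) \<and>
     (\<forall>m n. pw M m (add M n (one M)) = mul M (pw M m n) m) \<and>
     (\<forall>m. \<not> ls M m (zer M)) \<and>
     (\<forall>m n. ls M m (add M n (one M)) \<longleftrightarrow> (ls M m n \<or> m = n)) \<and>
     \<comment> \<open>Ind (set induction)\<close>
     (\<forall>X\<in>sets M. zer M \<in> X \<and> (\<forall>n. n \<in> X \<longrightarrow> add M n (one M) \<in> X) \<longrightarrow> (\<forall>n. n \<in> X)) \<and>
     \<comment> \<open>arithmetic comprehension (arbitrary number and set parameters)\<close>
     (\<forall>\<psi> v e E. arith \<psi> \<longrightarrow> (\<forall>Z. E Z \<in> sets M) \<longrightarrow>
         {a. sat M (e(v := a)) E \<psi>} \<in> sets M)"

(* Cantor pairing, defined in the language: 2p = (a+b)(a+b+1) + 2a *)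
definition ispair :: "'a s2 \<Rightarrow> 'a \<Rightarrow> 'a \<Rightarrow> 'a \<Rightarrow> bool" where
  "ispair M p a b \<longleftrightarrow>
     add M p p = add M (mul M (add M a b) (add M (add M a b) (one M))) (add M a a)"

definition pair :: "'a s2 \<Rightarrow> 'a \<Rightarrow> 'a \<Rightarrow> 'a" where
  "pair M a b = (THE p. ispair M p a b)"

definition proj0 :: "'a s2 \<Rightarrow> 'a \<Rightarrow> 'a" where
  "proj0 M p = (THE a. \<exists>b. ispair M p a b)"

definition proj1 :: "'a s2 \<Rightarrow> 'a \<Rightarrow> 'a" where
  "proj1 M p = (THE b. \<exists>a. ispair M p a b)"

definition leL :: "'a s2 \<Rightarrow> 'a set \<Rightarrow> 'a \<Rightarrow> 'a \<Rightarrow> bool" where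
  "leL M L x y \<longleftrightarrow> pair M x y \<in> L"

definition ltL :: "'a s2 \<Rightarrow> 'a set \<Rightarrow> 'a \<Rightarrow> 'a \<Rightarrow> bool" where
  "ltL M L x y \<longleftrightarrow> leL M L x y \<and> x \<noteq> y"

definition fieldL :: "'a s2 \<Rightarrow> 'a set \<Rightarrow> 'a \<Rightarrow> bool" where
  "fieldL M L x \<longleftrightarrow> (\<exists>y. leL M L x y \<or> leL M L y x)"

definition wo :: "'a s2 \<Rightarrow> 'a set \<Rightarrow> bool" where
  "wo M L \<longleftrightarrow>
     (\<forall>x. fieldL M L x \<longrightarrow> leL M L x x) \<and>
     (\<forall>x y. leL M L x y \<and> leL M L y x \<longrightarrow> x = y) \<and>
     (\<forall>x y z. leL M L x y \<and> leL M L y z \<longrightarrow> leL M L x z) \<and>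
     (\<forall>x y. fieldL M L x \<and> fieldL M L y \<longrightarrow> leL M L x y \<or> leL M L y x) \<and>
     (\<forall>Z\<in>sets M. (\<exists>x\<in>Z. fieldL M L x) \<longrightarrow>
         (\<exists>x\<in>Z. fieldL M L x \<and> (\<forall>y\<in>Z. fieldL M L y \<longrightarrow> leL M L x y)))"

(* Y_{<\<xi>}: replacing atoms t \<in> Y by (t)_0 <_\<Lambda> \<xi> \<and> t \<in> Y *)
definition below :: "'a s2 \<Rightarrow> 'a set \<Rightarrow> 'a \<Rightarrow> 'a set \<Rightarrow> 'a set" where
  "below M L \<xi> Y = {t \<in> Y. ltL M L (proj0 M t) \<xi>}"

(* TR^\<Lambda>_\<lambda>(\<phi>,Y), where \<phi> = \<phi>(x,Y) with x the number variable xv and Y the set variable yv;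
   remaining free variables of \<phi> are parameters interpreted by e, E *)
definition TR :: "'a s2 \<Rightarrow> fm \<Rightarrow> nat \<Rightarrow> nat \<Rightarrow> (nat \<Rightarrow> 'a) \<Rightarrow> (nat \<Rightarrow> 'a set)
                  \<Rightarrow> 'a set \<Rightarrow> 'a \<Rightarrow> 'a set \<Rightarrow> bool" where
  "TR M \<phi> xv yv e E L lam Y \<longleftrightarrow>
     (\<forall>\<xi>. leL M L \<xi> lam \<longrightarrow>
        (\<forall>x. pair M \<xi> x \<in> Y \<longleftrightarrow> sat M (e(xv := x)) (E(yv := below M L \<xi> Y)) \<phi>))"

definition TRhat :: "'a s2 \<Rightarrow> fm \<Rightarrow> nat \<Rightarrow> nat \<Rightarrow> (nat \<Rightarrow> 'a) \<Rightarrow> (nat \<Rightarrow> 'a set)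
                  \<Rightarrow> 'a set \<Rightarrow> 'a \<Rightarrow> 'a set \<Rightarrow> bool" where
  "TRhat M \<phi> xv yv e E L lam X \<longleftrightarrow>
     (\<forall>x. leL M L (proj0 M x) lam \<longrightarrow>
        (x \<in> X \<longleftrightarrow>
          (\<forall>Y\<in>sets M. TR M \<phi> xv yv e E L (proj0 M x) Y \<longrightarrow>
              sat M (e(xv := proj1 M x)) (E(yv := below M L (proj0 M x) Y)) \<phi>)))"

end

theory Submission
  imports Defs
begin

locale aca =
  fixes M :: "'a s2" and S0 :: "'a set"
  assumes aca: "ACA0_model M" and S0: "S0 \<in> sets M"
begin

lemmas axs = aca[unfolded ACA0_model_def]

abbreviation pl (infixl "\<oplus>" 65) where "x \<oplus> y \<equiv> add M x y"
abbreviation tms (infixl "\<otimes>" 70) where "x \<otimes> y \<equiv> mul M x y"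
abbreviation oo where "oo \<equiv> zer M"
abbreviation ii where "ii \<equiv> one M"

lemma A1: "m \<oplus> ii \<noteq> oo" using axs[THEN conjunct1] by blast
lemma A2: "m \<oplus> ii = n \<oplus> ii \<Longrightarrow> m = n" using axs[THEN conjunct2, THEN conjunct1] by blast
lemma A3: "m \<noteq> oo \<Longrightarrow> \<exists>n. m = n \<oplus> ii" using axs[THEN conjunct2, THEN conjunct2, THEN conjunct1] by blast
lemma A4: "m \<oplus> oo = m" using axs[THEN conjunct2, THEN conjunct2, THEN conjunct2, THEN conjunct1] by blast
lemma A5: "m \<oplus> (n \<oplus> ii) = (m \<oplus> n) \<oplus> ii" using axs[THEN conjunct2, THEN conjunct2, THEN conjunct2, THEN conjunct2, THEN conjunct1] by blast
lemma A6: "m \<otimes> oo = oo" using axs[THEN conjunct2, THEN conjunct2, THEN conjunct2, THEN conjunct2, THEN conjunct2, THEN conjunct1] by blast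
lemma A7: "m \<otimes> (n \<oplus> ii) = m \<otimes> n \<oplus> m" using axs[THEN conjunct2, THEN conjunct2, THEN conjunct2, THEN conjunct2, THEN conjunct2, THEN conjunct2, THEN conjunct1] by blast
lemma INDA: "X \<in> sets M \<Longrightarrow> oo \<in> X \<Longrightarrow> (\<forall>n. n \<in> X \<longrightarrow> n \<oplus> ii \<in> X) \<Longrightarrow> n \<in> X"
  using axs[THEN conjunct2, THEN conjunct2, THEN conjunct2, THEN conjunct2, THEN conjunct2, THEN conjunct2, THEN conjunct2, THEN conjunct2, THEN conjunct2, THEN conjunct2, THEN conjunct2, THEN conjunct1] by blast
lemma compr: "arith \<psi> \<Longrightarrow> \<forall>Z. E Z \<in> sets M \<Longrightarrow> {a. sat M (e(v := a)) E \<psi>} \<in> sets M"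
  using axs[THEN conjunct2, THEN conjunct2, THEN conjunct2, THEN conjunct2, THEN conjunct2, THEN conjunct2, THEN conjunct2, THEN conjunct2, THEN conjunct2, THEN conjunct2, THEN conjunct2, THEN conjunct2] by blast

lemma ind:
  assumes "arith \<psi>" and "\<And>n. P n = sat M (e(0:=n)) (\<lambda>_. S0) \<psi>"
    and "P oo" and "\<And>n. P n \<Longrightarrow> P (n \<oplus> ii)"
  shows "P n"
proof -
  have s: "{a. sat M (e(0 := a)) (\<lambda>_. S0) \<psi>} \<in> sets M" by (rule compr) (use assms(1) S0 in auto)
  have "n \<in> {a. sat M (e(0 := a)) (\<lambda>_. S0) \<psi>}"
    by (rule INDA[OF s]) (use assms(2-4) in auto)
  thus ?thesis using assms(2) by auto
qed

lemma add_0_left: "oo \<oplus> n = n"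
  by (rule ind[where P="\<lambda>n. oo \<oplus> n = n" and \<psi>="Eq (Add Zero (Var 0)) (Var 0)" and e="\<lambda>_. oo"])
     (auto simp: A4 A5)

lemma add_Suc_left: "(m \<oplus> ii) \<oplus> n = (m \<oplus> n) \<oplus> ii"
  by (rule ind[where P="\<lambda>n. (m \<oplus> ii) \<oplus> n = (m \<oplus> n) \<oplus> ii" and
     \<psi>="Eq (Add (Add (Var 1) One) (Var 0)) (Add (Add (Var 1) (Var 0)) One)" and e="\<lambda>_. m"])
     (auto simp: A4 A5)

lemma add_comm: "m \<oplus> n = n \<oplus> m"
  by (rule ind[where P="\<lambda>n. m \<oplus> n = n \<oplus> m" and
     \<psi>="Eq (Add (Var 1) (Var 0)) (Add (Var 0) (Var 1))" and e="\<lambda>_. m"])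
     (auto simp: A4 A5 add_0_left add_Suc_left)

lemma add_assoc: "(a \<oplus> b) \<oplus> c = a \<oplus> (b \<oplus> c)"
  by (rule ind[where P="\<lambda>c. (a \<oplus> b) \<oplus> c = a \<oplus> (b \<oplus> c)" and
     \<psi>="Eq (Add (Add (Var 1) (Var 2)) (Var 0)) (Add (Var 1) (Add (Var 2) (Var 0)))" and e="(\<lambda>_. b)(1:=a)"])
     (auto simp: A4 A5)

lemma add_lcomm: "a \<oplus> (b \<oplus> c) = b \<oplus> (a \<oplus> c)"
  by (metis add_assoc add_comm)

lemmas add_ac = add_assoc add_comm add_lcomm

lemma add_cancel: "a \<oplus> c = b \<oplus> c \<Longrightarrow> a = b"
  by (rule ind[where P="\<lambda>c. a \<oplus> c = b \<oplus> c \<longrightarrow> a = b" and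
     \<psi>="Imp (Eq (Add (Var 1) (Var 0)) (Add (Var 2) (Var 0))) (Eq (Var 1) (Var 2))" and e="(\<lambda>_. b)(1:=a)", rule_format])
     (auto simp: A4 A5 dest: A2)

lemma mul_1: "n \<otimes> ii = n"
proof -
  have "n \<otimes> (oo \<oplus> ii) = n \<otimes> oo \<oplus> n" by (rule A7)
  thus ?thesis by (simp add: add_0_left A6)
qed

lemma mul_0_left: "oo \<otimes> n = oo"
  by (rule ind[where P="\<lambda>n. oo \<otimes> n = oo" and \<psi>="Eq (Mul Zero (Var 0)) Zero" and e="\<lambda>_. oo"])
     (auto simp: A4 A6 A7)

lemma mul_Suc_left: "(m \<oplus> ii) \<otimes> n = m \<otimes> n \<oplus> n"
proof (rule ind[where P="\<lambda>n. (m \<oplus> ii) \<otimes> n = m \<otimes> n \<oplus> n" and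
     \<psi>="Eq (Mul (Add (Var 1) One) (Var 0)) (Add (Mul (Var 1) (Var 0)) (Var 0))" and e="\<lambda>_. m"])
  fix n assume "(m \<oplus> ii) \<otimes> n = m \<otimes> n \<oplus> n"
  thus "(m \<oplus> ii) \<otimes> (n \<oplus> ii) = m \<otimes> (n \<oplus> ii) \<oplus> (n \<oplus> ii)"
    by (simp add: A7 add_ac)
qed (auto simp: A4 A6)


lemma add_cancel_left: "c \<oplus> a = c \<oplus> b \<Longrightarrow> a = b"
  using add_cancel add_comm by metis

lemma mul_comm: "m \<otimes> n = n \<otimes> m"
  by (rule ind[where P="\<lambda>n. m \<otimes> n = n \<otimes> m" and
     \<psi>="Eq (Mul (Var 1) (Var 0)) (Mul (Var 0) (Var 1))" and e="\<lambda>_. m"])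
     (auto simp: A6 A7 mul_0_left mul_Suc_left)

lemma distrib_l: "a \<otimes> (b \<oplus> c) = a \<otimes> b \<oplus> a \<otimes> c"
proof (rule ind[where P="\<lambda>c. a \<otimes> (b \<oplus> c) = a \<otimes> b \<oplus> a \<otimes> c" and
     \<psi>="Eq (Mul (Var 1) (Add (Var 2) (Var 0))) (Add (Mul (Var 1) (Var 2)) (Mul (Var 1) (Var 0)))" and e="(\<lambda>_. b)(1:=a)"])
  fix c assume IH: "a \<otimes> (b \<oplus> c) = a \<otimes> b \<oplus> a \<otimes> c"
  show "a \<otimes> (b \<oplus> (c \<oplus> ii)) = a \<otimes> b \<oplus> a \<otimes> (c \<oplus> ii)"
    by (simp only: A5 A7 IH) (simp add: add_ac)
qed (auto simp: A4 A6)

lemma distrib_r: "(b \<oplus> c) \<otimes> a = b \<otimes> a \<oplus> c \<otimes> a"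
  using distrib_l mul_comm by metis

lemma mul_assoc: "(a \<otimes> b) \<otimes> c = a \<otimes> (b \<otimes> c)"
proof (rule ind[where P="\<lambda>c. (a \<otimes> b) \<otimes> c = a \<otimes> (b \<otimes> c)" and
     \<psi>="Eq (Mul (Mul (Var 1) (Var 2)) (Var 0)) (Mul (Var 1) (Mul (Var 2) (Var 0)))" and e="(\<lambda>_. b)(1:=a)"])
  fix c assume "(a \<otimes> b) \<otimes> c = a \<otimes> (b \<otimes> c)"
  thus "(a \<otimes> b) \<otimes> (c \<oplus> ii) = a \<otimes> (b \<otimes> (c \<oplus> ii))"
    by (simp add: A7 distrib_l mul_1)
qed (auto simp: A6)

lemma mul_lcomm: "a \<otimes> (b \<otimes> c) = b \<otimes> (a \<otimes> c)"
  by (metis mul_assoc mul_comm)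

lemmas mul_ac = mul_assoc mul_comm mul_lcomm

lemma mul_1_left: "ii \<otimes> n = n" using mul_1 mul_comm by metis

lemmas norm = add_ac mul_ac distrib_l distrib_r mul_1 mul_1_left A4 add_0_left A6 mul_0_left

lemma tri: "(\<exists>d. n = m \<oplus> d) \<or> (\<exists>d. m = n \<oplus> d)"
proof (rule ind[where P="\<lambda>n. (\<exists>d. n = m \<oplus> d) \<or> (\<exists>d. m = n \<oplus> d)" and
     \<psi>="Disj (Ex 3 (Eq (Var 0) (Add (Var 1) (Var 3)))) (Ex 3 (Eq (Var 1) (Add (Var 0) (Var 3))))" and e="\<lambda>_. m"])
  fix n assume "(\<exists>d. n = m \<oplus> d) \<or> (\<exists>d. m = n \<oplus> d)"
  thus "(\<exists>d. n \<oplus> ii = m \<oplus> d) \<or> (\<exists>d. m = n \<oplus> ii \<oplus> d)"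
  proof
    assume "\<exists>d. n = m \<oplus> d"
    then obtain d where "n = m \<oplus> d" by blast
    hence "n \<oplus> ii = m \<oplus> (d \<oplus> ii)" by (simp add: A5)
    thus ?thesis by blast
  next
    assume "\<exists>d. m = n \<oplus> d"
    then obtain d where d: "m = n \<oplus> d" by blast
    show ?thesis
    proof (cases "d = oo")
      case True thus ?thesis using d by (auto simp: A4)
    next
      case False
      then obtain d' where "d = d' \<oplus> ii" using A3 by blast
      hence "m = n \<oplus> ii \<oplus> d'" using d by (simp add: add_ac)
      thus ?thesis by blast
    qed
  qed
qed (auto simp: add_0_left)

lemma sum_zero: "u \<oplus> v = oo \<Longrightarrow> v = oo"
proof (rule ccontr)
  assume "u \<oplus> v = oo" "v \<noteq> oo"
  then obtain v' where "v = v' \<oplus> ii" using A3 by blast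
  thus False using \<open>u \<oplus> v = oo\<close> A1 by (simp add: A5)
qed

lemma parity: "\<exists>k. n = k \<oplus> k \<or> n = (k \<oplus> k) \<oplus> ii"
proof (rule ind[where P="\<lambda>n. \<exists>k. n = k \<oplus> k \<or> n = (k \<oplus> k) \<oplus> ii" and
     \<psi>="Ex 1 (Disj (Eq (Var 0) (Add (Var 1) (Var 1))) (Eq (Var 0) (Add (Add (Var 1) (Var 1)) One)))" and e="\<lambda>_. n"])
  show "\<exists>k. oo = k \<oplus> k \<or> oo = k \<oplus> k \<oplus> ii" by (rule exI[of _ oo]) (simp add: A4)
  fix n assume "\<exists>k. n = k \<oplus> k \<or> n = k \<oplus> k \<oplus> ii"
  then obtain k where "n = k \<oplus> k \<or> n = k \<oplus> k \<oplus> ii" by blast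
  thus "\<exists>k. n \<oplus> ii = k \<oplus> k \<or> n \<oplus> ii = k \<oplus> k \<oplus> ii"
  proof
    assume "n = k \<oplus> k" thus ?thesis by blast
  next
    assume "n = k \<oplus> k \<oplus> ii"
    hence "n \<oplus> ii = (k \<oplus> ii) \<oplus> (k \<oplus> ii)" by (simp add: add_ac)
    thus ?thesis by blast
  qed
qed auto

lemma dbl_cancel1: "k \<oplus> k = j \<oplus> j \<Longrightarrow> j = k \<oplus> d \<Longrightarrow> j = k"
proof -
  assume a: "k \<oplus> k = j \<oplus> j" and j: "j = k \<oplus> d"
  have "j \<oplus> j = (d \<oplus> d) \<oplus> (k \<oplus> k)" unfolding j by (simp add: add_ac)
  hence "oo \<oplus> (k \<oplus> k) = (d \<oplus> d) \<oplus> (k \<oplus> k)" using a by (simp add: add_0_left)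
  hence "oo = d \<oplus> d" by (rule add_cancel)
  hence "d = oo" using sum_zero by metis
  thus "j = k" using j by (simp add: A4)
qed

lemma dbl_cancel: "k \<oplus> k = j \<oplus> j \<Longrightarrow> k = j"
  using tri[of j k] dbl_cancel1 by metis

lemma even_prod: "\<exists>k. n \<otimes> (n \<oplus> ii) = k \<oplus> k"
proof -
  obtain k where "n = k \<oplus> k \<or> n = (k \<oplus> k) \<oplus> ii" using parity by blast
  thus ?thesis
  proof
    assume "n = k \<oplus> k"
    hence "n \<otimes> (n \<oplus> ii) = k \<otimes> (n \<oplus> ii) \<oplus> k \<otimes> (n \<oplus> ii)" by (simp add: distrib_r)
    thus ?thesis by blast
  next
    assume "n = (k \<oplus> k) \<oplus> ii"
    hence "n \<oplus> ii = (k \<oplus> ii) \<oplus> (k \<oplus> ii)" by (simp add: add_ac)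
    hence "n \<otimes> (n \<oplus> ii) = n \<otimes> (k \<oplus> ii) \<oplus> n \<otimes> (k \<oplus> ii)" by (simp add: distrib_l)
    thus ?thesis by blast
  qed
qed


end

context aca begin
definition dbl where "dbl a b = (a \<oplus> b) \<otimes> ((a \<oplus> b) \<oplus> ii) \<oplus> (a \<oplus> a)"

lemma ispair_iff: "ispair M p a b \<longleftrightarrow> p \<oplus> p = dbl a b"
  unfolding ispair_def dbl_def by simp

lemma pair_ex: "\<exists>p. p \<oplus> p = dbl a b"
proof -
  obtain k where k: "(a \<oplus> b) \<otimes> ((a \<oplus> b) \<oplus> ii) = k \<oplus> k" using even_prod by blast
  have "(k \<oplus> a) \<oplus> (k \<oplus> a) = dbl a b" unfolding dbl_def k by (simp add: add_ac)
  thus ?thesis by blast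
qed

lemma dbl_big: "((a \<oplus> b) \<oplus> (d \<oplus> ii)) \<otimes> (((a \<oplus> b) \<oplus> (d \<oplus> ii)) \<oplus> ii) \<oplus> (a' \<oplus> a')
   = dbl a b \<oplus> ((a \<otimes> d \<oplus> a \<otimes> d \<oplus> b \<otimes> d \<oplus> b \<otimes> d \<oplus> b \<oplus> b \<oplus> (d \<oplus> ii) \<otimes> (d \<oplus> ii) \<oplus> d \<oplus> a' \<oplus> a') \<oplus> ii)"
  unfolding dbl_def by (simp add: norm)

lemma dbl_inj1: "dbl a b = dbl a' b' \<Longrightarrow> a' \<oplus> b' = (a \<oplus> b) \<oplus> d \<Longrightarrow> d = oo"
proof (rule ccontr)
  assume h: "dbl a b = dbl a' b'" "a' \<oplus> b' = (a \<oplus> b) \<oplus> d" "d \<noteq> oo"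
  then obtain d' where d: "d = d' \<oplus> ii" using A3 by blast
  have "dbl a' b' = ((a \<oplus> b) \<oplus> (d' \<oplus> ii)) \<otimes> (((a \<oplus> b) \<oplus> (d' \<oplus> ii)) \<oplus> ii) \<oplus> (a' \<oplus> a')"
    unfolding dbl_def h(2) d ..
  also have "\<dots> = dbl a b \<oplus> ((a \<otimes> d' \<oplus> a \<otimes> d' \<oplus> b \<otimes> d' \<oplus> b \<otimes> d' \<oplus> b \<oplus> b \<oplus> (d' \<oplus> ii) \<otimes> (d' \<oplus> ii) \<oplus> d' \<oplus> a' \<oplus> a') \<oplus> ii)"
    by (rule dbl_big)
  finally have "dbl a b \<oplus> oo = dbl a b \<oplus> ((a \<otimes> d' \<oplus> a \<otimes> d' \<oplus> b \<otimes> d' \<oplus> b \<otimes> d' \<oplus> b \<oplus> b \<oplus> (d' \<oplus> ii) \<otimes> (d' \<oplus> ii) \<oplus> d' \<oplus> a' \<oplus> a') \<oplus> ii)"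
    using h(1) by (simp add: A4)
  hence "oo = (a \<otimes> d' \<oplus> a \<otimes> d' \<oplus> b \<otimes> d' \<oplus> b \<otimes> d' \<oplus> b \<oplus> b \<oplus> (d' \<oplus> ii) \<otimes> (d' \<oplus> ii) \<oplus> d' \<oplus> a' \<oplus> a') \<oplus> ii"
    by (rule add_cancel_left)
  hence "(a \<otimes> d' \<oplus> a \<otimes> d' \<oplus> b \<otimes> d' \<oplus> b \<otimes> d' \<oplus> b \<oplus> b \<oplus> (d' \<oplus> ii) \<otimes> (d' \<oplus> ii) \<oplus> d' \<oplus> a' \<oplus> a') \<oplus> ii = oo"
    by (rule sym)
  thus False by (rule A1[THEN notE])
qed

lemma dbl_inj: "dbl a b = dbl a' b' \<Longrightarrow> a = a' \<and> b = b'"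
proof -
  assume h: "dbl a b = dbl a' b'"
  have s: "a' \<oplus> b' = a \<oplus> b"
  proof (cases "\<exists>d. a' \<oplus> b' = (a \<oplus> b) \<oplus> d")
    case True
    then obtain d where "a' \<oplus> b' = (a \<oplus> b) \<oplus> d" by blast
    moreover hence "d = oo" by (rule dbl_inj1[OF h])
    ultimately show ?thesis by (simp add: A4)
  next
    case False
    then obtain d where d: "a \<oplus> b = (a' \<oplus> b') \<oplus> d" using tri[of "a' \<oplus> b'" "a \<oplus> b"] by blast
    hence "d = oo" by (rule dbl_inj1[OF h[symmetric]])
    thus ?thesis using d by (simp add: A4)
  qed
  have "(a \<oplus> b) \<otimes> ((a \<oplus> b) \<oplus> ii) \<oplus> (a \<oplus> a) = (a \<oplus> b) \<otimes> ((a \<oplus> b) \<oplus> ii) \<oplus> (a' \<oplus> a')"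
    using h unfolding dbl_def s .
  hence "a \<oplus> a = a' \<oplus> a'" by (rule add_cancel_left)
  hence a: "a = a'" by (rule dbl_cancel)
  hence "b = b'" using s add_cancel_left by metis
  thus ?thesis using a by blast
qed

lemma surj: "\<exists>a b. p \<oplus> p = dbl a b"
proof (rule ind[where P="\<lambda>p. \<exists>a b. p \<oplus> p = dbl a b" and
     \<psi>="Ex 1 (Ex 2 (Eq (Add (Var 0) (Var 0)) (Add (Mul (Add (Var 1) (Var 2)) (Add (Add (Var 1) (Var 2)) One)) (Add (Var 1) (Var 1)))))" and e="\<lambda>_. p"])
  show "\<exists>a b. oo \<oplus> oo = dbl a b" by (rule exI[of _ oo], rule exI[of _ oo]) (simp add: dbl_def norm)
  fix p assume "\<exists>a b. p \<oplus> p = dbl a b"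
  then obtain a b where ab: "p \<oplus> p = dbl a b" by blast
  show "\<exists>a b. (p \<oplus> ii) \<oplus> (p \<oplus> ii) = dbl a b"
  proof (cases "b = oo")
    case True
    have "(p \<oplus> ii) \<oplus> (p \<oplus> ii) = (p \<oplus> p) \<oplus> (ii \<oplus> ii)" by (simp add: add_ac)
    also have "\<dots> = dbl oo (a \<oplus> ii)" unfolding ab True dbl_def by (simp add: norm)
    finally show ?thesis by blast
  next
    case False
    then obtain b' where b: "b = b' \<oplus> ii" using A3 by blast
    have "(p \<oplus> ii) \<oplus> (p \<oplus> ii) = (p \<oplus> p) \<oplus> (ii \<oplus> ii)" by (simp add: add_ac)
    also have "\<dots> = dbl (a \<oplus> ii) b'" unfolding ab b dbl_def by (simp add: norm)
    finally show ?thesis by blast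
  qed
qed (auto simp: dbl_def)

lemma ispair_ex1: "\<exists>!p. ispair M p a b"
proof -
  obtain p where p: "p \<oplus> p = dbl a b" using pair_ex by blast
  show ?thesis unfolding ispair_iff
  proof (rule ex1I[of _ p])
    show "p \<oplus> p = dbl a b" by (rule p)
    fix q assume "q \<oplus> q = dbl a b"
    thus "q = p" using p by (metis dbl_cancel)
  qed
qed

lemma ispair_of_pair: "ispair M (pair M a b) a b"
  unfolding pair_def by (rule theI') (rule ispair_ex1)

lemma ispair_pair: "ispair M p a b \<longleftrightarrow> p = pair M a b"
proof
  assume "ispair M p a b"
  moreover have "ispair M (pair M a b) a b" by (rule ispair_of_pair)
  ultimately show "p = pair M a b" using ispair_ex1[of a b] by blast
qed (simp add: ispair_of_pair)

lemma pair_dbl: "pair M a b \<oplus> pair M a b = dbl a b"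
  using ispair_of_pair ispair_iff by blast

lemma pair_inj: "pair M a b = pair M a' b' \<longleftrightarrow> a = a' \<and> b = b'"
proof
  assume "pair M a b = pair M a' b'"
  hence "dbl a b = pair M a' b' \<oplus> pair M a' b'" using pair_dbl[of a b] by simp
  also have "\<dots> = dbl a' b'" by (rule pair_dbl)
  finally have "dbl a b = dbl a' b'" .
  thus "a = a' \<and> b = b'" by (rule dbl_inj)
qed simp

lemma pair_surj: "\<exists>a b. t = pair M a b"
proof -
  obtain a b where "t \<oplus> t = dbl a b" using surj by blast
  hence "t = pair M a b" by (subst ispair_pair[symmetric]) (simp add: ispair_iff)
  thus ?thesis by blast
qed

lemma proj0_pair[simp]: "proj0 M (pair M a b) = a"
  unfolding proj0_def
proof (rule the_equality)
  show "\<exists>b'. ispair M (pair M a b) a b'" using ispair_of_pair by blast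
  fix a' assume "\<exists>b'. ispair M (pair M a b) a' b'"
  then obtain b' where "pair M a b = pair M a' b'" by (auto simp: ispair_pair)
  thus "a' = a" by (simp add: pair_inj)
qed

lemma proj1_pair[simp]: "proj1 M (pair M a b) = b"
  unfolding proj1_def
proof (rule the_equality)
  show "\<exists>a'. ispair M (pair M a b) a' b" using ispair_of_pair by blast
  fix b' assume "\<exists>a'. ispair M (pair M a b) a' b'"
  then obtain a' where "pair M a b = pair M a' b'" by (auto simp: ispair_pair)
  thus "b' = b" by (simp add: pair_inj)
qed

lemma pair_proj[simp]: "pair M (proj0 M t) (proj1 M t) = t"
proof -
  obtain a b where "t = pair M a b" using pair_surj by blast
  thus ?thesis by simp
qed

end

fun nbt :: "tm \<Rightarrow> nat" where
  "nbt (Var n) = Suc n"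
| "nbt Zero = 0"
| "nbt One = 0"
| "nbt (Add t u) = max (nbt t) (nbt u)"
| "nbt (Mul t u) = max (nbt t) (nbt u)"
| "nbt (Pow t u) = max (nbt t) (nbt u)"

fun nb :: "fm \<Rightarrow> nat" where
  "nb (Eq t u) = max (nbt t) (nbt u)"
| "nb (Lt t u) = max (nbt t) (nbt u)"
| "nb (Mem t X) = nbt t"
| "nb (Neg p) = nb p"
| "nb (Conj p q) = max (nb p) (nb q)"
| "nb (Disj p q) = max (nb p) (nb q)"
| "nb (Imp p q) = max (nb p) (nb q)"
| "nb (All n p) = max (Suc n) (nb p)"
| "nb (Ex n p) = max (Suc n) (nb p)"
| "nb (SAll X p) = nb p"
| "nb (SEx X p) = nb p"

fun sb :: "fm \<Rightarrow> nat" where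
  "sb (Eq t u) = 0"
| "sb (Lt t u) = 0"
| "sb (Mem t X) = Suc X"
| "sb (Neg p) = sb p"
| "sb (Conj p q) = max (sb p) (sb q)"
| "sb (Disj p q) = max (sb p) (sb q)"
| "sb (Imp p q) = max (sb p) (sb q)"
| "sb (All n p) = sb p"
| "sb (Ex n p) = sb p"
| "sb (SAll X p) = max (Suc X) (sb p)"
| "sb (SEx X p) = max (Suc X) (sb p)"

lemma ev_cong: "(\<forall>n<nbt t. e n = e' n) \<Longrightarrow> ev M e t = ev M e' t"
  by (induction t) auto

lemma sat_cong: "(\<forall>n<nb p. e n = e' n) \<Longrightarrow> (\<forall>Z<sb p. E Z = E' Z) \<Longrightarrow> sat M e E p = sat M e' E' p"
proof (induction p arbitrary: e e' E E')
  case (Eq t u) thus ?case using ev_cong[of t e e' M] ev_cong[of u e e' M] by auto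
next
  case (Lt t u) thus ?case using ev_cong[of t e e' M] ev_cong[of u e e' M] by auto
next
  case (Mem t X) thus ?case using ev_cong[of t e e' M] by auto
next
  case (All n p)
  have "\<And>a. sat M (e(n:=a)) E p = sat M (e'(n:=a)) E' p"
    by (rule All.IH) (use All.prems in auto)
  thus ?case by simp
next
  case (Ex n p)
  have "\<And>a. sat M (e(n:=a)) E p = sat M (e'(n:=a)) E' p"
    by (rule Ex.IH) (use Ex.prems in auto)
  thus ?case by simp
next
  case (SAll X p)
  have "\<And>A. sat M e (E(X:=A)) p = sat M e' (E'(X:=A)) p"
    by (rule SAll.IH) (use SAll.prems in auto)
  thus ?case by simp
next
  case (SEx X p)
  have "\<And>A. sat M e (E(X:=A)) p = sat M e' (E'(X:=A)) p"
    by (rule SEx.IH) (use SEx.prems in auto)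
  thus ?case by simp
next
  case (Conj p q)
  have "sat M e E p = sat M e' E' p" by (rule Conj.IH(1)) (use Conj.prems in auto)
  moreover have "sat M e E q = sat M e' E' q" by (rule Conj.IH(2)) (use Conj.prems in auto)
  ultimately show ?case by simp
next
  case (Disj p q)
  have "sat M e E p = sat M e' E' p" by (rule Disj.IH(1)) (use Disj.prems in auto)
  moreover have "sat M e E q = sat M e' E' q" by (rule Disj.IH(2)) (use Disj.prems in auto)
  ultimately show ?case by simp
next
  case (Imp p q)
  have "sat M e E p = sat M e' E' p" by (rule Imp.IH(1)) (use Imp.prems in auto)
  moreover have "sat M e E q = sat M e' E' q" by (rule Imp.IH(2)) (use Imp.prems in auto)
  ultimately show ?case by simp
next
  case (Neg p)
  have "sat M e E p = sat M e' E' p" by (rule Neg.IH) (use Neg.prems in auto)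
  thus ?case by simp
qed

definition dblT :: "tm \<Rightarrow> tm \<Rightarrow> tm" where
  "dblT u w = Add (Mul (Add u w) (Add (Add u w) One)) (Add u u)"

fun sub :: "nat \<Rightarrow> nat \<Rightarrow> fm \<Rightarrow> fm" where
  "sub yv xi (Mem t Y) = (if Y = yv then Mem (dblT t (Var xi)) Y else Mem t Y)"
| "sub yv xi (Neg p) = Neg (sub yv xi p)"
| "sub yv xi (Conj p q) = Conj (sub yv xi p) (sub yv xi q)"
| "sub yv xi (Disj p q) = Disj (sub yv xi p) (sub yv xi q)"
| "sub yv xi (Imp p q) = Imp (sub yv xi p) (sub yv xi q)"
| "sub yv xi (All n p) = All n (sub yv xi p)"
| "sub yv xi (Ex n p) = Ex n (sub yv xi p)"
| "sub yv xi (SAll X p) = SAll X (sub yv xi p)"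
| "sub yv xi (SEx X p) = SEx X (sub yv xi p)"
| "sub yv xi p = p"

lemma arith_sub[simp]: "arith (sub yv xi p) = arith p"
  by (induction p) auto

definition IsPairF :: "tm \<Rightarrow> tm \<Rightarrow> tm \<Rightarrow> fm" where
  "IsPairF p u w = Eq (Add p p) (dblT u w)"

definition PairIn :: "tm \<Rightarrow> tm \<Rightarrow> nat \<Rightarrow> nat \<Rightarrow> fm" where
  "PairIn u w k S = Ex k (Conj (IsPairF (Var k) u w) (Mem (Var k) S))"

definition IffF :: "fm \<Rightarrow> fm \<Rightarrow> fm" where
  "IffF p q = Conj (Imp p q) (Imp q p)"

lemma arith_IsPairF[simp]: "arith (IsPairF p u w)" by (simp add: IsPairF_def)
lemma arith_PairIn[simp]: "arith (PairIn u w k S)" by (simp add: PairIn_def)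
lemma arith_IffF[simp]: "arith (IffF p q) = (arith p \<and> arith q)" by (auto simp: IffF_def)
lemma sat_IffF[simp]: "sat M e E (IffF p q) = (sat M e E p = sat M e E q)" by (auto simp: IffF_def)

context aca begin

lemma ev_dblT[simp]: "ev M e (dblT u w) = dbl (ev M e u) (ev M e w)"
  by (simp add: dblT_def dbl_def)

lemma sat_IsPairF[simp]: "sat M e E (IsPairF p u w) = (ev M e p = pair M (ev M e u) (ev M e w))"
  by (simp add: IsPairF_def ispair_pair[symmetric] ispair_iff)

lemma sat_PairIn[simp]: "i \<noteq> k \<Longrightarrow> j \<noteq> k \<Longrightarrow> sat M e E (PairIn (Var i) (Var j) k S) = (pair M (e i) (e j) \<in> E S)"
  by (auto simp: PairIn_def)

definition CC where "CC L X = {q. \<exists>t \<xi>. q = dbl t \<xi> \<and> t \<in> below M L \<xi> X}"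

lemma dbl_in_CC: "dbl t \<xi> \<in> CC L X \<longleftrightarrow> t \<in> below M L \<xi> X"
  unfolding CC_def using dbl_inj by blast

lemma sat_sub: "arith p \<Longrightarrow> nb p \<le> xi \<Longrightarrow>
  sat M e (F(yv := CC L X)) (sub yv xi p) = sat M e (F(yv := below M L (e xi) X)) p"
proof (induction p arbitrary: e F)
  case (Mem t Y) thus ?case by (auto simp: dbl_in_CC)
next
  case (All n p)
  have "\<And>a. sat M (e(n:=a)) (F(yv := CC L X)) (sub yv xi p) = sat M (e(n:=a)) (F(yv := below M L (e xi) X)) p"
  proof -
    fix a
    have "n \<noteq> xi" using All.prems by simp
    have "sat M (e(n:=a)) (F(yv := CC L X)) (sub yv xi p) = sat M (e(n:=a)) (F(yv := below M L ((e(n:=a)) xi) X)) p"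
      by (rule All.IH) (use All.prems in auto)
    thus "?thesis a" using \<open>n \<noteq> xi\<close> by simp
  qed
  thus ?case by (simp only: sat.simps sub.simps)
next
  case (Ex n p)
  have "\<And>a. sat M (e(n:=a)) (F(yv := CC L X)) (sub yv xi p) = sat M (e(n:=a)) (F(yv := below M L (e xi) X)) p"
  proof -
    fix a
    have "n \<noteq> xi" using Ex.prems by simp
    have "sat M (e(n:=a)) (F(yv := CC L X)) (sub yv xi p) = sat M (e(n:=a)) (F(yv := below M L ((e(n:=a)) xi) X)) p"
      by (rule Ex.IH) (use Ex.prems in auto)
    thus "?thesis a" using \<open>n \<noteq> xi\<close> by simp
  qed
  thus ?case by (simp only: sat.simps sub.simps)
next
qed auto

end

context aca begin

lemma ltL_iff: "ltL M L x y \<longleftrightarrow> pair M x y \<in> L \<and> x \<noteq> y"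
  by (simp add: ltL_def leL_def)

lemma below_iff: "t \<in> below M L \<xi> X \<longleftrightarrow> t \<in> X \<and> ltL M L (proj0 M t) \<xi>"
  by (simp add: below_def)

lemma ltL_proj: "ltL M L (proj0 M t) \<xi> \<longleftrightarrow> (\<exists>a b. t = pair M a b \<and> pair M a \<xi> \<in> L \<and> a \<noteq> \<xi>)"
  by (metis ltL_iff pair_proj proj0_pair)

lemma CC_in_sets: assumes "X \<in> sets M" "L \<in> sets M" shows "CC L X \<in> sets M"
proof -
  let ?E = "\<lambda>Z::nat. if Z = 1 then L else X"
  let ?psi = "Ex 1 (Ex 2 (Conj (Eq (Var 0) (dblT (Var 1) (Var 2))) (Conj (Mem (Var 1) 0)
     (Ex 3 (Ex 4 (Conj (IsPairF (Var 1) (Var 3) (Var 4)) (Conj (PairIn (Var 3) (Var 2) 5 1) (Neg (Eq (Var 3) (Var 2))))))))))"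
  have "{a. sat M ((\<lambda>_. zer M)(0 := a)) ?E ?psi} \<in> sets M"
    by (rule compr) (use assms in auto)
  moreover have "{a. sat M ((\<lambda>_. zer M)(0 := a)) ?E ?psi} = CC L X"
    unfolding CC_def by (auto simp: below_iff ltL_proj)
  ultimately show ?thesis by simp
qed

lemma below_in_sets: assumes "X \<in> sets M" "L \<in> sets M" shows "below M L \<xi> X \<in> sets M"
proof -
  let ?E = "\<lambda>Z::nat. if Z = 1 then L else X"
  let ?psi = "Conj (Mem (Var 0) 0)
     (Ex 3 (Ex 4 (Conj (IsPairF (Var 0) (Var 3) (Var 4)) (Conj (PairIn (Var 3) (Var 2) 5 1) (Neg (Eq (Var 3) (Var 2)))))))"
  have "{a. sat M ((\<lambda>_. \<xi>)(0 := a)) ?E ?psi} \<in> sets M"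
    by (rule compr) (use assms in auto)
  moreover have "{a. sat M ((\<lambda>_. \<xi>)(0 := a)) ?E ?psi} = below M L \<xi> X"
    by (auto simp: below_iff ltL_proj ltL_iff) (metis pair_proj)
  ultimately show ?thesis by simp
qed

lemma D_in_sets: assumes "L \<in> sets M" "Y \<in> sets M" "Y' \<in> sets M"
  shows "{\<eta>. leL M L \<eta> lam \<and> leL M L \<eta> lam' \<and> (\<exists>a. \<not> (pair M \<eta> a \<in> Y \<longleftrightarrow> pair M \<eta> a \<in> Y'))} \<in> sets M"
proof -
  let ?E = "\<lambda>Z::nat. if Z = 0 then L else if Z = 1 then Y else Y'"
  let ?psi = "Conj (PairIn (Var 0) (Var 1) 5 0) (Conj (PairIn (Var 0) (Var 2) 5 0)
      (Ex 3 (Neg (IffF (PairIn (Var 0) (Var 3) 5 1) (PairIn (Var 0) (Var 3) 5 2)))))"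
  have "{a. sat M (((\<lambda>_. lam)(2 := lam'))(0 := a)) ?E ?psi} \<in> sets M"
    by (rule compr) (use assms in auto)
  moreover have "{a. sat M (((\<lambda>_. lam)(2 := lam'))(0 := a)) ?E ?psi} =
     {\<eta>. leL M L \<eta> lam \<and> leL M L \<eta> lam' \<and> (\<exists>a. \<not> (pair M \<eta> a \<in> Y \<longleftrightarrow> pair M \<eta> a \<in> Y'))}"
    by (auto simp: leL_def)
  ultimately show ?thesis by simp
qed

end

lemma wo_refl: "wo M L \<Longrightarrow> fieldL M L x \<Longrightarrow> leL M L x x" unfolding wo_def by blast
lemma wo_antisym: "wo M L \<Longrightarrow> leL M L x y \<Longrightarrow> leL M L y x \<Longrightarrow> x = y" unfolding wo_def by blast
lemma wo_trans: "wo M L \<Longrightarrow> leL M L x y \<Longrightarrow> leL M L y z \<Longrightarrow> leL M L x z" unfolding wo_def by blast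
lemma wo_least: "wo M L \<Longrightarrow> Z \<in> sets M \<Longrightarrow> x \<in> Z \<Longrightarrow> fieldL M L x \<Longrightarrow>
   \<exists>x\<in>Z. fieldL M L x \<and> (\<forall>y\<in>Z. fieldL M L y \<longrightarrow> leL M L x y)"
  unfolding wo_def by blast
lemma field_leL: "leL M L x y \<Longrightarrow> fieldL M L x" unfolding fieldL_def by blast

context aca begin

lemma TR_unique:
  assumes wo: "wo M L" and sets: "L \<in> sets M" "Y \<in> sets M" "Y' \<in> sets M"
    and T1: "TR M \<phi> xv yv e E L lam Y" and T2: "TR M \<phi> xv yv e E L lam' Y'"
    and h1: "leL M L \<eta> lam" and h2: "leL M L \<eta> lam'"
  shows "pair M \<eta> a \<in> Y \<longleftrightarrow> pair M \<eta> a \<in> Y'"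
proof (rule ccontr)
  assume h3: "\<not> (pair M \<eta> a \<in> Y \<longleftrightarrow> pair M \<eta> a \<in> Y')"
  let ?D = "{\<eta>. leL M L \<eta> lam \<and> leL M L \<eta> lam' \<and> (\<exists>a. \<not> (pair M \<eta> a \<in> Y \<longleftrightarrow> pair M \<eta> a \<in> Y'))}"
  have Ds: "?D \<in> sets M" by (rule D_in_sets) (use sets in auto)
  have "\<eta> \<in> ?D" using h1 h2 h3 by blast
  then obtain \<eta>0 where \<eta>0: "\<eta>0 \<in> ?D" "fieldL M L \<eta>0" and least: "\<forall>y\<in>?D. fieldL M L y \<longrightarrow> leL M L \<eta>0 y"
    using wo_least[OF wo Ds] field_leL[OF h1] by blast
  have bel: "below M L \<eta>0 Y = below M L \<eta>0 Y'"
  proof (rule set_eqI)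
    fix t
    show "t \<in> below M L \<eta>0 Y \<longleftrightarrow> t \<in> below M L \<eta>0 Y'"
    proof (cases "ltL M L (proj0 M t) \<eta>0")
      case False thus ?thesis by (simp add: below_iff)
    next
      case True
      hence lt: "leL M L (proj0 M t) \<eta>0" "proj0 M t \<noteq> \<eta>0" by (auto simp: ltL_def)
      have l1: "leL M L (proj0 M t) lam" using wo_trans[OF wo lt(1)] \<eta>0(1) by auto
      have l2: "leL M L (proj0 M t) lam'" using wo_trans[OF wo lt(1)] \<eta>0(1) by auto
      have "t \<in> Y \<longleftrightarrow> t \<in> Y'"
      proof (rule ccontr)
        assume n: "\<not> (t \<in> Y \<longleftrightarrow> t \<in> Y')"
        have "\<not> (pair M (proj0 M t) (proj1 M t) \<in> Y \<longleftrightarrow> pair M (proj0 M t) (proj1 M t) \<in> Y')"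
          using n by simp
        hence "proj0 M t \<in> ?D" using l1 l2 by blast
        hence "leL M L \<eta>0 (proj0 M t)" using least field_leL[OF lt(1)] by blast
        thus False using wo_antisym[OF wo lt(1)] lt(2) by blast
      qed
      thus ?thesis by (simp add: below_iff True)
    qed
  qed
  from \<eta>0(1) obtain a0 where a0: "\<not> (pair M \<eta>0 a0 \<in> Y \<longleftrightarrow> pair M \<eta>0 a0 \<in> Y')" "leL M L \<eta>0 lam" "leL M L \<eta>0 lam'"
    by blast
  have "pair M \<eta>0 a0 \<in> Y \<longleftrightarrow> sat M (e(xv:=a0)) (E(yv:=below M L \<eta>0 Y)) \<phi>"
    using T1 a0(2) unfolding TR_def by blast
  moreover have "pair M \<eta>0 a0 \<in> Y' \<longleftrightarrow> sat M (e(xv:=a0)) (E(yv:=below M L \<eta>0 Y')) \<phi>"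
    using T2 a0(3) unfolding TR_def by blast
  ultimately show False using a0(1) bel by simp
qed

lemma below_eq:
  assumes wo: "wo M L" and sets: "L \<in> sets M" "Y \<in> sets M" "Y' \<in> sets M"
    and T1: "TR M \<phi> xv yv e E L lam Y" and T2: "TR M \<phi> xv yv e E L lam' Y'"
    and h1: "leL M L \<xi> lam" and h2: "leL M L \<xi> lam'"
  shows "below M L \<xi> Y = below M L \<xi> Y'"
proof (rule set_eqI)
  fix t
  show "t \<in> below M L \<xi> Y \<longleftrightarrow> t \<in> below M L \<xi> Y'"
  proof (cases "ltL M L (proj0 M t) \<xi>")
    case False thus ?thesis by (simp add: below_iff)
  next
    case True
    hence lt: "leL M L (proj0 M t) \<xi>" by (auto simp: ltL_def)
    have "pair M (proj0 M t) (proj1 M t) \<in> Y \<longleftrightarrow> pair M (proj0 M t) (proj1 M t) \<in> Y'"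
      by (rule TR_unique[OF wo sets T1 T2 wo_trans[OF wo lt h1] wo_trans[OF wo lt h2]])
    thus ?thesis by (simp add: below_iff True)
  qed
qed

end

context aca begin

lemma F_in_sets:
  assumes phi: "arith \<phi>" and E: "\<forall>Z. E Z \<in> sets M" and X: "X \<in> sets M" and L: "L \<in> sets M"
  shows "{\<xi>. leL M L \<xi> lam \<and> (\<exists>a. \<not> (pair M \<xi> a \<in> X \<longleftrightarrow> sat M (e(xv:=a)) (E(yv:=below M L \<xi> X)) \<phi>))} \<in> sets M"
proof -
  define n0 where "n0 = max (nb \<phi>) (Suc xv)"
  define s0 where "s0 = max (sb \<phi>) (Suc yv)"
  define xi where "xi = n0"
  define lamv where "lamv = Suc n0"
  define kv where "kv = Suc (Suc n0)"
  define XV where "XV = s0"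
  define LV where "LV = Suc s0"
  have d: "xi \<noteq> xv" "xv \<noteq> xi" "lamv \<noteq> xv" "xv \<noteq> lamv" "kv \<noteq> xv" "xv \<noteq> kv"
    "xi \<noteq> lamv" "lamv \<noteq> xi" "kv \<noteq> xi" "xi \<noteq> kv" "kv \<noteq> lamv" "lamv \<noteq> kv"
    "XV \<noteq> yv" "yv \<noteq> XV" "LV \<noteq> yv" "yv \<noteq> LV" "XV \<noteq> LV" "LV \<noteq> XV"
    "nb \<phi> \<le> xi" "nb \<phi> \<le> lamv" "sb \<phi> \<le> XV" "sb \<phi> \<le> LV"
    unfolding n0_def s0_def xi_def lamv_def kv_def XV_def LV_def by auto
  let ?psi = "Conj (PairIn (Var xi) (Var lamv) kv LV) (Ex xv (Neg (IffF (PairIn (Var xi) (Var xv) kv XV) (sub yv xi \<phi>))))"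
  let ?e1 = "e(lamv := lam)"
  let ?E0 = "E(XV := X, LV := L)"
  let ?E1 = "?E0(yv := CC L X)"
  have E1: "\<forall>Z. ?E1 Z \<in> sets M" using E X L CC_in_sets[OF X L] by auto
  have "{\<xi>. sat M (?e1(xi := \<xi>)) ?E1 ?psi} \<in> sets M" by (rule compr) (use phi E1 in auto)
  moreover have "{\<xi>. sat M (?e1(xi := \<xi>)) ?E1 ?psi} =
     {\<xi>. leL M L \<xi> lam \<and> (\<exists>a. \<not> (pair M \<xi> a \<in> X \<longleftrightarrow> sat M (e(xv:=a)) (E(yv:=below M L \<xi> X)) \<phi>))}"
  proof (rule set_eqI)
    fix \<xi>
    have key: "\<And>a. sat M (?e1(xi:=\<xi>, xv:=a)) ?E1 (sub yv xi \<phi>) = sat M (e(xv:=a)) (E(yv := below M L \<xi> X)) \<phi>"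
    proof -
      fix a
      have "sat M (?e1(xi:=\<xi>, xv:=a)) ?E1 (sub yv xi \<phi>) =
            sat M (?e1(xi:=\<xi>, xv:=a)) (?E0(yv := below M L ((?e1(xi:=\<xi>, xv:=a)) xi) X)) \<phi>"
        by (rule sat_sub) (use phi d in auto)
      also have "\<dots> = sat M (?e1(xi:=\<xi>, xv:=a)) (?E0(yv := below M L \<xi> X)) \<phi>" using d by simp
      also have "\<dots> = sat M (e(xv:=a)) (E(yv := below M L \<xi> X)) \<phi>"
        by (rule sat_cong) (use d in auto)
      finally show "?thesis a" .
    qed
    show "\<xi> \<in> {\<xi>. sat M (?e1(xi := \<xi>)) ?E1 ?psi} \<longleftrightarrow>
       \<xi> \<in> {\<xi>. leL M L \<xi> lam \<and> (\<exists>a. \<not> (pair M \<xi> a \<in> X \<longleftrightarrow> sat M (e(xv:=a)) (E(yv:=below M L \<xi> X)) \<phi>))}"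
      using key d by (simp add: leL_def)
  qed
  ultimately show ?thesis by simp
qed

lemma Y_in_sets:
  assumes phi: "arith \<phi>" and E: "\<forall>Z. E Z \<in> sets M" and B: "B \<in> sets M"
  shows "{t. t \<in> B \<or> (proj0 M t = \<xi>0 \<and> sat M (e(xv := proj1 M t)) (E(yv:=B)) \<phi>)} \<in> sets M"
proof -
  define n0 where "n0 = max (nb \<phi>) (Suc xv)"
  define tv where "tv = n0"
  define av where "av = Suc n0"
  define zv where "zv = Suc (Suc n0)"
  have d: "tv \<noteq> xv" "xv \<noteq> tv" "av \<noteq> xv" "xv \<noteq> av" "zv \<noteq> xv" "xv \<noteq> zv"
    "tv \<noteq> av" "av \<noteq> tv" "zv \<noteq> tv" "tv \<noteq> zv" "zv \<noteq> av" "av \<noteq> zv"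
    "nb \<phi> \<le> tv" "nb \<phi> \<le> av" "nb \<phi> \<le> zv"
    unfolding n0_def tv_def av_def zv_def by auto
  let ?psi = "Disj (Mem (Var tv) yv) (Ex av (Ex xv (Conj (IsPairF (Var tv) (Var av) (Var xv)) (Conj (Eq (Var av) (Var zv)) \<phi>))))"
  let ?e2 = "e(zv := \<xi>0)"
  let ?E2 = "E(yv := B)"
  have E2: "\<forall>Z. ?E2 Z \<in> sets M" using E B by auto
  have "{t. sat M (?e2(tv := t)) ?E2 ?psi} \<in> sets M" by (rule compr) (use phi E2 in auto)
  moreover have "{t. sat M (?e2(tv := t)) ?E2 ?psi} =
      {t. t \<in> B \<or> (proj0 M t = \<xi>0 \<and> sat M (e(xv := proj1 M t)) (E(yv:=B)) \<phi>)}"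
  proof (rule set_eqI)
    fix t
    have key: "\<And>a b. sat M (?e2(tv := t, av := a, xv := b)) ?E2 \<phi> = sat M (e(xv := b)) ?E2 \<phi>"
      by (rule sat_cong) (use d in auto)
    have "sat M (?e2(tv := t)) ?E2 ?psi \<longleftrightarrow> t \<in> B \<or> (\<exists>a b. t = pair M a b \<and> a = \<xi>0 \<and> sat M (e(xv := b)) ?E2 \<phi>)"
      using d by (simp add: key)
    also have "\<dots> \<longleftrightarrow> t \<in> B \<or> (proj0 M t = \<xi>0 \<and> sat M (e(xv := proj1 M t)) (E(yv:=B)) \<phi>)"
    proof -
      have "(\<exists>a b. t = pair M a b \<and> a = \<xi>0 \<and> sat M (e(xv := b)) ?E2 \<phi>) \<longleftrightarrow>
            (proj0 M t = \<xi>0 \<and> sat M (e(xv := proj1 M t)) (E(yv:=B)) \<phi>)"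
      proof
        assume "\<exists>a b. t = pair M a b \<and> a = \<xi>0 \<and> sat M (e(xv := b)) ?E2 \<phi>"
        then obtain a b where "t = pair M a b" "a = \<xi>0" "sat M (e(xv := b)) ?E2 \<phi>" by blast
        thus "proj0 M t = \<xi>0 \<and> sat M (e(xv := proj1 M t)) (E(yv:=B)) \<phi>" by simp
      next
        assume h: "proj0 M t = \<xi>0 \<and> sat M (e(xv := proj1 M t)) (E(yv:=B)) \<phi>"
        show "\<exists>a b. t = pair M a b \<and> a = \<xi>0 \<and> sat M (e(xv := b)) ?E2 \<phi>"
        proof -
          have "t = pair M \<xi>0 (proj1 M t)" using pair_proj[of t] h by simp
          thus ?thesis using h by blast
        qed
      qed
      thus ?thesis by blast
    qed
    finally show "t \<in> {t. sat M (?e2(tv := t)) ?E2 ?psi} \<longleftrightarrow>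
      t \<in> {t. t \<in> B \<or> (proj0 M t = \<xi>0 \<and> sat M (e(xv := proj1 M t)) (E(yv:=B)) \<phi>)}" by simp
  qed
  ultimately show ?thesis by simp
qed

end

context aca begin

theorem main_loc:
  assumes phi: "arith \<phi>" and E: "\<forall>Z. E Z \<in> sets M" and L: "L \<in> sets M" and X: "X \<in> sets M"
    and wo: "wo M L"
  shows "TRhat M \<phi> xv yv e E L lam X \<longleftrightarrow> TR M \<phi> xv yv e E L lam X"
proof
  assume H: "TRhat M \<phi> xv yv e E L lam X"
  show "TR M \<phi> xv yv e E L lam X"
  proof (rule ccontr)
    assume nT: "\<not> TR M \<phi> xv yv e E L lam X"
    then obtain \<xi> a where xa: "leL M L \<xi> lam" "\<not> (pair M \<xi> a \<in> X \<longleftrightarrow> sat M (e(xv:=a)) (E(yv:=below M L \<xi> X)) \<phi>)"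
      unfolding TR_def by blast
    let ?F = "{\<xi>. leL M L \<xi> lam \<and> (\<exists>a. \<not> (pair M \<xi> a \<in> X \<longleftrightarrow> sat M (e(xv:=a)) (E(yv:=below M L \<xi> X)) \<phi>))}"
    have Fs: "?F \<in> sets M" by (rule F_in_sets[OF phi E X L])
    have "\<xi> \<in> ?F" using xa by blast
    then obtain \<xi>0 where \<xi>0: "\<xi>0 \<in> ?F" "fieldL M L \<xi>0" and least: "\<forall>y\<in>?F. fieldL M L y \<longrightarrow> leL M L \<xi>0 y"
      using wo_least[OF wo Fs] field_leL[OF xa(1)] by blast
    from \<xi>0(1) have \<xi>0lam: "leL M L \<xi>0 lam" by blast
    from \<xi>0(1) obtain a0 where a0: "\<not> (pair M \<xi>0 a0 \<in> X \<longleftrightarrow> sat M (e(xv:=a0)) (E(yv:=below M L \<xi>0 X)) \<phi>)"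
      by blast
    have good: "pair M \<eta> b \<in> X \<longleftrightarrow> sat M (e(xv:=b)) (E(yv:=below M L \<eta> X)) \<phi>" if lt: "ltL M L \<eta> \<xi>0" for \<eta> b
    proof (rule ccontr)
      assume n: "\<not> (pair M \<eta> b \<in> X \<longleftrightarrow> sat M (e(xv:=b)) (E(yv:=below M L \<eta> X)) \<phi>)"
      have l: "leL M L \<eta> \<xi>0" "\<eta> \<noteq> \<xi>0" using lt by (auto simp: ltL_def)
      hence "leL M L \<eta> lam" using wo_trans[OF wo _ \<xi>0lam] by blast
      hence "\<eta> \<in> ?F" using n by blast
      hence "leL M L \<xi>0 \<eta>" using least field_leL[OF l(1)] by blast
      thus False using wo_antisym[OF wo l(1)] l(2) by blast
    qed
    let ?B = "below M L \<xi>0 X"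
    have Bs: "?B \<in> sets M" by (rule below_in_sets[OF X L])
    let ?Y = "{t. t \<in> ?B \<or> (proj0 M t = \<xi>0 \<and> sat M (e(xv := proj1 M t)) (E(yv:=?B)) \<phi>)}"
    have Ys: "?Y \<in> sets M" by (rule Y_in_sets[OF phi E Bs])
    have belY: "below M L \<xi> ?Y = below M L \<xi> X" if lx: "leL M L \<xi> \<xi>0" for \<xi>
    proof (rule set_eqI)
      fix t
      show "t \<in> below M L \<xi> ?Y \<longleftrightarrow> t \<in> below M L \<xi> X"
      proof (cases "ltL M L (proj0 M t) \<xi>")
        case False thus ?thesis by (simp add: below_iff)
      next
        case True
        hence l: "leL M L (proj0 M t) \<xi>" "proj0 M t \<noteq> \<xi>" by (auto simp: ltL_def)
        have ne: "proj0 M t \<noteq> \<xi>0"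
        proof
          assume "proj0 M t = \<xi>0"
          hence "\<xi> = \<xi>0" using wo_antisym[OF wo lx] l(1) by auto
          thus False using l(2) \<open>proj0 M t = \<xi>0\<close> by simp
        qed
        have "ltL M L (proj0 M t) \<xi>0" using wo_trans[OF wo l(1) lx] ne by (simp add: ltL_def)
        thus ?thesis using True ne by (auto simp: below_iff)
      qed
    qed
    have TRY: "TR M \<phi> xv yv e E L \<xi>0 ?Y"
      unfolding TR_def
    proof (intro allI impI)
      fix \<xi> b assume lx: "leL M L \<xi> \<xi>0"
      show "pair M \<xi> b \<in> ?Y \<longleftrightarrow> sat M (e(xv:=b)) (E(yv:=below M L \<xi> ?Y)) \<phi>"
      proof (cases "\<xi> = \<xi>0")
        case True
        have "pair M \<xi>0 b \<notin> ?B" by (simp add: below_iff ltL_def)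
        thus ?thesis using True belY[OF lx] by simp
      next
        case False
        hence lt: "ltL M L \<xi> \<xi>0" using lx by (simp add: ltL_def)
        have "pair M \<xi> b \<in> ?Y \<longleftrightarrow> pair M \<xi> b \<in> X" using False lt by (simp add: below_iff)
        also have "\<dots> \<longleftrightarrow> sat M (e(xv:=b)) (E(yv:=below M L \<xi> X)) \<phi>" by (rule good[OF lt])
        finally show ?thesis using belY[OF lx] by simp
      qed
    qed
    have refl0: "leL M L \<xi>0 \<xi>0" by (rule wo_refl[OF wo \<xi>0(2)])
    have "pair M \<xi>0 a0 \<in> X \<longleftrightarrow> (\<forall>Y\<in>sets M. TR M \<phi> xv yv e E L \<xi>0 Y \<longrightarrow> sat M (e(xv := a0)) (E(yv:= below M L \<xi>0 Y)) \<phi>)"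
      using H[unfolded TRhat_def, rule_format, of "pair M \<xi>0 a0"] \<xi>0lam by simp
    also have "\<dots> \<longleftrightarrow> sat M (e(xv:=a0)) (E(yv:=?B)) \<phi>"
    proof
      assume "\<forall>Y\<in>sets M. TR M \<phi> xv yv e E L \<xi>0 Y \<longrightarrow> sat M (e(xv := a0)) (E(yv:= below M L \<xi>0 Y)) \<phi>"
      hence "sat M (e(xv := a0)) (E(yv:= below M L \<xi>0 ?Y)) \<phi>" using Ys TRY by blast
      thus "sat M (e(xv:=a0)) (E(yv:=?B)) \<phi>" using belY[OF refl0] by simp
    next
      assume s: "sat M (e(xv:=a0)) (E(yv:=?B)) \<phi>"
      show "\<forall>Y\<in>sets M. TR M \<phi> xv yv e E L \<xi>0 Y \<longrightarrow> sat M (e(xv := a0)) (E(yv:= below M L \<xi>0 Y)) \<phi>"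
      proof (intro ballI impI)
        fix Y assume Y: "Y \<in> sets M" and TY: "TR M \<phi> xv yv e E L \<xi>0 Y"
        have "below M L \<xi>0 Y = below M L \<xi>0 ?Y"
          by (rule below_eq[OF wo L Y Ys TY TRY refl0 refl0])
        thus "sat M (e(xv := a0)) (E(yv:= below M L \<xi>0 Y)) \<phi>" using s belY[OF refl0] by simp
      qed
    qed
    finally show False using a0 by simp
  qed
next
  assume T: "TR M \<phi> xv yv e E L lam X"
  show "TRhat M \<phi> xv yv e E L lam X" unfolding TRhat_def
  proof (intro allI impI)
    fix x assume lx: "leL M L (proj0 M x) lam"
    define \<xi> where "\<xi> = proj0 M x"
    define a where "a = proj1 M x"
    have xp: "x = pair M \<xi> a" unfolding \<xi>_def a_def by simp
    have lx': "leL M L \<xi> lam" using lx \<xi>_def by simp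
    have refl: "leL M L \<xi> \<xi>" by (rule wo_refl[OF wo field_leL[OF lx']])
    have TX: "TR M \<phi> xv yv e E L \<xi> X" using T wo_trans[OF wo _ lx'] unfolding TR_def by blast
    have "x \<in> X \<longleftrightarrow> sat M (e(xv:=a)) (E(yv:=below M L \<xi> X)) \<phi>"
      using T[unfolded TR_def, rule_format, OF lx', of a] xp by simp
    moreover have "(\<forall>Y\<in>sets M. TR M \<phi> xv yv e E L \<xi> Y \<longrightarrow> sat M (e(xv := a)) (E(yv:= below M L \<xi> Y)) \<phi>)
       \<longleftrightarrow> sat M (e(xv:=a)) (E(yv:=below M L \<xi> X)) \<phi>"
    proof
      assume "\<forall>Y\<in>sets M. TR M \<phi> xv yv e E L \<xi> Y \<longrightarrow> sat M (e(xv := a)) (E(yv:= below M L \<xi> Y)) \<phi>"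
      thus "sat M (e(xv:=a)) (E(yv:=below M L \<xi> X)) \<phi>" using X TX by blast
    next
      assume s: "sat M (e(xv:=a)) (E(yv:=below M L \<xi> X)) \<phi>"
      show "\<forall>Y\<in>sets M. TR M \<phi> xv yv e E L \<xi> Y \<longrightarrow> sat M (e(xv := a)) (E(yv:= below M L \<xi> Y)) \<phi>"
      proof (intro ballI impI)
        fix Y assume Y: "Y \<in> sets M" and TY: "TR M \<phi> xv yv e E L \<xi> Y"
        have "below M L \<xi> Y = below M L \<xi> X"
          by (rule below_eq[OF wo L Y X TY T refl lx'])
        thus "sat M (e(xv := a)) (E(yv:= below M L \<xi> Y)) \<phi>" using s by simp
      qed
    qed
    ultimately show "x \<in> X \<longleftrightarrow> (\<forall>Y\<in>sets M. TR M \<phi> xv yv e E L (proj0 M x) Y \<longrightarrow>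
              sat M (e(xv := proj1 M x)) (E(yv := below M L (proj0 M x) Y)) \<phi>)"
      unfolding \<xi>_def a_def by simp
  qed
qed

end

theorem mainTheorem14:
  fixes M :: "'a s2" and \<phi> :: fm and xv yv :: nat
    and e :: "nat \<Rightarrow> 'a" and E :: "nat \<Rightarrow> 'a set" and L X :: "'a set"
  assumes "ACA0_model M"
    and "arith \<phi>"
    and "\<forall>Z. E Z \<in> sets M"
    and "L \<in> sets M" and "X \<in> sets M"
  shows "wo M L \<longrightarrow>
           (\<forall>lam. fieldL M L lam \<longrightarrow>
              (TRhat M \<phi> xv yv e E L lam X \<longleftrightarrow> TR M \<phi> xv yv e E L lam X))"
proof -
  interpret aca M L using assms(1,4) by unfold_locales
  show ?thesis using main_loc assms(2-5) by blast
qed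

end
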